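(* Let $H,S,A,T$ be positive integers, let $\delta>0$, and write $L:=\log(2HSAT/\delta)$. Let $\mathcal{M}=(\{1,\dots,H\},\mathcal{S},\mathcal{A},R,P)$ (target) and $\mathcal{M}_0=(\{1,\dots,H\},\mathcal{S},\mathcal{A},R_0,P_0)$ (historical) be finite-horizon MDPs with a common state space $\mathcal{S}$ of $S$ states and action space $\mathcal{A}$ of $A$ actions, all random rewards taking values in $[0,1]$, with mean rewards $r,r_0$ and transition probability vectors $P(\cdot;h,s,a),P_0(\cdot;h,s,a)$. Assume there is $\Delta>0$ with $|r(h,s,a)-r_0(h,s,a)|\le\Delta$ and $\|P(\cdot;h,s,a)-P_0(\cdot;h,s,a)\|_1\le\Delta$ for all $(h,s,a)$. Let $V^*_{h+1}\in\mathbb{R}^{\mathcal S}$ be the optimal value-to-go of $\mathcal{M}$ from epoch $h+1$ (see context). Fix a triple $(h,s,a)$, integers $n\ge 1$ and $N\ge 0$. Let $(R_k,S'_k)_{k=1}^n$ be i.i.d. with $R_k\sim R(h,s,a)$ and $S'_k\sim P(\cdot;h,s,a)$, and $(R^0_j,S^{0}_j)_{j=1}^N$ i.i.d. with $R^0_j\sim R_0(h,s,a)$, $S^0_j\sim P_0(\cdot;h,s,a)$, the two samples being independent. Let $\bar r_n,\bar P_n$ be the empirical mean reward and empirical next-state distribution of the target sample and $\bar r_0,\bar P_0$ those of the historical sample. Define $$\lambda^{DP}_{n,N}=\begin{cases}\dfrac{n+Nn\Delta/\sqrt{(N+n)L/2-\Delta^2Nn}}{N+n}, & n<L/(2\Delta^2),\\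 1,& \text{otherwise},\end{cases}$$ and the data-pooling estimators $\hat r^{DP}_n=\lambda^{DP}_{n,N}\bar r_n+(1-\lambda^{DP}_{n,N})\bar r_0$, $\hat P^{DP}_n=\lambda^{DP}_{n,N}\bar P_n+(1-\lambda^{DP}_{n,N})\bar P_0$. Then there exist nonnegative numbers $\varepsilon^{DP}_R(n,N),\varepsilon^{DP}_P(n,N),\varepsilon^{DP}_V(n,N)$ which are confidence radii for $(\hat r^{DP}_n,\hat P^{DP}_n)$, i.e. $$\mathbb{P}\big(|\hat r^{DP}_n-r(h,s,a)|>\varepsilon^{DP}_R(n,N)\big)<\tfrac{\delta}{HSAT},\qquad \mathbb{P}\big(\|\hat P^{DP}_n-P(\cdot;h,s,a)\|_1>\varepsilon^{DP}_P(n,N)\big)<\tfrac{\delta}{HSAT},$$ $$\mathbb{P}\Big(\big|\hat r^{DP}_n-r(h,s,a)+\langle \hat P^{DP}_n-P(\cdot;h,s,a),V^*_{h+1}\rangle\big|>\varepsilon^{DP}_V(n,N)\Big)<\tfrac{\delta}{HSAT},$$ and such that $\varepsilon^{DP}_R(n,N)\le\varepsilon^H_R(n)$, $\varepsilon^{DP}_P(n,N)\le\varepsilon^H_P(n)$, $\varepsilon^{DP}_V(n,N)\le\varepsilon^H_V(n)$, where $\varepsilon^H_R(n)=\sqrt{L/(2n)}$, $\varepsilon^H_P(n)=\sqrt{2(S\log 2+L)/n}$, $\varepsilon^H_V(n)=H\sqrt{L/(2n)}$. Moreover these three inequalities are strict when $n<L/(2\Delta^2)$ and $N\ge 1$.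
   Context: For a finite-horizon MDP with epochs $1,\dots,H$, the optimal Q-function is defined by $Q^*(H+1,\cdot,\cdot)\equiv 0$ and $Q^*(h,s,a)=r(h,s,a)+\sum_{s'}P(s';h,s,a)\max_{y\in\mathcal A}Q^*(h+1,s',y)$; the optimal value-to-go is $V^*_{h+1}(s')=\max_{y\in\mathcal A}Q^*(h+1,s',y)$ (computed in the target MDP $\mathcal M$). When $N=0$ the formula gives $\lambda^{DP}_{n,0}=1$, so $\bar r_0,\bar P_0$ do not enter. *)

theory Defs
  imports "HOL-Probability.Probability"
begin

text \<open>Optimal Q-function of a finite-horizon MDP with epochs 1..H, mean rewards r and
  transition kernels P. Qrem m h s a is the Q-value at epoch h when m epochs remain
  (m = H + 1 - h); Qrem 0 = 0 corresponds to Q*(H+1,.,.) = 0.\<close>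
fun Qrem :: "(nat \<Rightarrow> 's::finite \<Rightarrow> 'a::finite \<Rightarrow> real) \<Rightarrow> (nat \<Rightarrow> 's \<Rightarrow> 'a \<Rightarrow> 's pmf)
              \<Rightarrow> nat \<Rightarrow> nat \<Rightarrow> 's \<Rightarrow> 'a \<Rightarrow> real" where
  "Qrem r P 0 h s a = 0"
| "Qrem r P (Suc m) h s a =
     r h s a + (\<Sum>s'\<in>UNIV. pmf (P h s a) s' * (MAX y\<in>UNIV. Qrem r P m (Suc h) s' y))"

definition Qstar :: "nat \<Rightarrow> (nat \<Rightarrow> 's::finite \<Rightarrow> 'a::finite \<Rightarrow> real) \<Rightarrow> (nat \<Rightarrow> 's \<Rightarrow> 'a \<Rightarrow> 's pmf)
              \<Rightarrow> nat \<Rightarrow> 's \<Rightarrow> 'a \<Rightarrow> real" where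
  "Qstar H r P h s a = Qrem r P (H + 1 - h) h s a"

definition Vstar :: "nat \<Rightarrow> (nat \<Rightarrow> 's::finite \<Rightarrow> 'a::finite \<Rightarrow> real) \<Rightarrow> (nat \<Rightarrow> 's \<Rightarrow> 'a \<Rightarrow> 's pmf)
              \<Rightarrow> nat \<Rightarrow> 's \<Rightarrow> real" where
  "Vstar H r P h s = (MAX y\<in>(UNIV::'a set). Qstar H r P h s y)"

definition mean_reward :: "real measure \<Rightarrow> real" where
  "mean_reward M = (\<integral>x. x \<partial>M)"

definition sample_space ::
  "nat \<Rightarrow> nat \<Rightarrow> real measure \<Rightarrow> 's pmf \<Rightarrow> real measure \<Rightarrow> 's pmf
     \<Rightarrow> ((nat \<Rightarrow> real \<times> 's) \<times> (nat \<Rightarrow> real \<times> 's)) measure" where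
  "sample_space n N Rt Pt R0 P0 =
     (PiM {..<n} (\<lambda>_. Rt \<Otimes>\<^sub>M measure_pmf Pt)) \<Otimes>\<^sub>M (PiM {..<N} (\<lambda>_. R0 \<Otimes>\<^sub>M measure_pmf P0))"

definition emp_reward :: "nat \<Rightarrow> (nat \<Rightarrow> real \<times> 's) \<Rightarrow> real" where
  "emp_reward m \<omega> = (\<Sum>k<m. fst (\<omega> k)) / real m"

definition emp_dist :: "nat \<Rightarrow> (nat \<Rightarrow> real \<times> 's) \<Rightarrow> 's \<Rightarrow> real" where
  "emp_dist m \<omega> s' = real (card {k. k < m \<and> snd (\<omega> k) = s'}) / real m"

definition lambda_DP :: "real \<Rightarrow> real \<Rightarrow> nat \<Rightarrow> nat \<Rightarrow> real" where
  "lambda_DP L \<Delta> n N =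
     (if real n < L / (2 * \<Delta>^2)
      then (real n + real N * real n * \<Delta> / sqrt ((real N + real n) * L / 2 - \<Delta>^2 * real N * real n))
           / (real N + real n)
      else 1)"

definition r_DP :: "real \<Rightarrow> real \<Rightarrow> nat \<Rightarrow> nat \<Rightarrow> (nat \<Rightarrow> real \<times> 's) \<times> (nat \<Rightarrow> real \<times> 's) \<Rightarrow> real" where
  "r_DP L \<Delta> n N \<omega> =
     lambda_DP L \<Delta> n N * emp_reward n (fst \<omega>) + (1 - lambda_DP L \<Delta> n N) * emp_reward N (snd \<omega>)"

definition P_DP :: "real \<Rightarrow> real \<Rightarrow> nat \<Rightarrow> nat \<Rightarrow> (nat \<Rightarrow> real \<times> 's) \<times> (nat \<Rightarrow> real \<times> 's) \<Rightarrow> 's \<Rightarrow> real" where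
  "P_DP L \<Delta> n N \<omega> s' =
     lambda_DP L \<Delta> n N * emp_dist n (fst \<omega>) s' + (1 - lambda_DP L \<Delta> n N) * emp_dist N (snd \<omega>) s'"

end

theory Submission
  imports Defs
begin


lemma pair_nn_prod:
  assumes p1: "prob_space M1" and p2: "prob_space M2"
    and F[measurable]: "F \<in> borel_measurable M1" and G[measurable]: "G \<in> borel_measurable M2"
  shows "(\<integral>\<^sup>+\<omega>. F (fst \<omega>) * G (snd \<omega>) \<partial>(M1 \<Otimes>\<^sub>M M2)) = integral\<^sup>N M1 F * integral\<^sup>N M2 G"
proof -
  interpret M2: prob_space M2 by fact
  have "(\<integral>\<^sup>+\<omega>. F (fst \<omega>) * G (snd \<omega>) \<partial>(M1 \<Otimes>\<^sub>M M2)) = (\<integral>\<^sup>+ x. \<integral>\<^sup>+ y. F x * G y \<partial>M2 \<partial>M1)"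
    by (subst M2.nn_integral_fst[symmetric]) auto
  also have "\<dots> = (\<integral>\<^sup>+ x. F x * integral\<^sup>N M2 G \<partial>M1)"
    by (intro nn_integral_cong) (simp add: nn_integral_cmult)
  also have "\<dots> = integral\<^sup>N M1 F * integral\<^sup>N M2 G"
    by (simp add: nn_integral_multc)
  finally show ?thesis .
qed

lemma PiM_nn_prod:
  assumes p1: "prob_space M1" and F[measurable]: "F \<in> borel_measurable M1"
  shows "(\<integral>\<^sup>+\<omega>. (\<Prod>k<n. F (\<omega> k)) \<partial>(PiM {..<n} (\<lambda>_. M1))) = (integral\<^sup>N M1 F) ^ n"
proof -
  interpret M1: prob_space M1 by fact
  interpret product_sigma_finite "\<lambda>_. M1" by unfold_locales
  show ?thesis
    using product_nn_integral_prod[of "{..<n}" "\<lambda>_. F"] by simp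
qed

lemma mgf_pair:
  fixes M1 :: "'x measure" and M2 :: "'y measure"
  assumes p1: "prob_space M1" and p2: "prob_space M2"
  and f[measurable]: "f \<in> borel_measurable M1" and g[measurable]: "g \<in> borel_measurable M2"
  and af: "AE x in M1. f x \<in> {a1..b1}" and ag: "AE x in M2. g x \<in> {a2..b2}"
  and l: "l > 0"
  shows "(\<integral>\<^sup>+\<omega>. ennreal (exp (l * ((\<Sum>k<n. f (fst \<omega> k) - integral\<^sup>L M1 f) + (\<Sum>j<N. g (snd \<omega> j) - integral\<^sup>L M2 g))))
           \<partial>(PiM {..<n} (\<lambda>_. M1) \<Otimes>\<^sub>M PiM {..<N} (\<lambda>_. M2)))
         \<le> ennreal (exp (l^2 * (real n * (b1-a1)^2 + real N * (b2-a2)^2) / 8))"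
proof -
  interpret B1: interval_bounded_random_variable M1 f a1 b1
    using p1 af by (simp add: interval_bounded_random_variable_def interval_bounded_random_variable_axioms_def)
  interpret B2: interval_bounded_random_variable M2 g a2 b2
    using p2 ag by (simp add: interval_bounded_random_variable_def interval_bounded_random_variable_axioms_def)
  define F where "F = (\<lambda>x. ennreal (exp (l * (f x - integral\<^sup>L M1 f))))"
  define G where "G = (\<lambda>x. ennreal (exp (l * (g x - integral\<^sup>L M2 g))))"
  have [measurable]: "F \<in> borel_measurable M1" "G \<in> borel_measurable M2" unfolding F_def G_def by measurable
  have eq: "ennreal (exp (l * ((\<Sum>k<n. f (fst \<omega> k) - integral\<^sup>L M1 f) + (\<Sum>j<N. g (snd \<omega> j) - integral\<^sup>L M2 g))))
     = (\<Prod>k<n. F (fst \<omega> k)) * (\<Prod>j<N. G (snd \<omega> j))" for \<omega>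
    by (simp add: F_def G_def distrib_left sum_distrib_left exp_add exp_sum prod_ennreal ennreal_mult'' prod_nonneg)
  have "(\<integral>\<^sup>+\<omega>. ennreal (exp (l * ((\<Sum>k<n. f (fst \<omega> k) - integral\<^sup>L M1 f) + (\<Sum>j<N. g (snd \<omega> j) - integral\<^sup>L M2 g))))
           \<partial>(PiM {..<n} (\<lambda>_. M1) \<Otimes>\<^sub>M PiM {..<N} (\<lambda>_. M2)))
      = (\<integral>\<^sup>+\<omega>. (\<Prod>k<n. F (fst \<omega> k)) * (\<Prod>j<N. G (snd \<omega> j)) \<partial>(PiM {..<n} (\<lambda>_. M1) \<Otimes>\<^sub>M PiM {..<N} (\<lambda>_. M2)))"
    by (simp only: eq)
  also have "\<dots> = (\<integral>\<^sup>+\<omega>. (\<Prod>k<n. F (\<omega> k)) \<partial>PiM {..<n} (\<lambda>_. M1)) * (\<integral>\<^sup>+\<omega>. (\<Prod>j<N. G (\<omega> j)) \<partial>PiM {..<N} (\<lambda>_. M2))"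
    by (rule pair_nn_prod[where F="\<lambda>\<omega>. \<Prod>k<n. F (\<omega> k)" and G="\<lambda>\<omega>. \<Prod>j<N. G (\<omega> j)"])
       (auto intro!: prob_space_PiM p1 p2)
  also have "\<dots> = (integral\<^sup>N M1 F)^n * (integral\<^sup>N M2 G)^N"
    by (simp add: PiM_nn_prod p1 p2)
  also have "\<dots> \<le> (ennreal (exp (l^2 * (b1-a1)^2/8)))^n * (ennreal (exp (l^2 * (b2-a2)^2/8)))^N"
    unfolding F_def G_def
    by (intro mult_mono power_mono B1.Hoeffdings_lemma_nn_integral B2.Hoeffdings_lemma_nn_integral l) auto
  also have "\<dots> = ennreal (exp (l^2 * (real n * (b1-a1)^2 + real N * (b2-a2)^2) / 8))"
  proof -
    have "exp (l^2 * (b1-a1)^2/8) ^ n * exp (l^2 * (b2-a2)^2/8) ^ N = exp (l^2 * (real n * (b1-a1)^2 + real N * (b2-a2)^2) / 8)"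
      by (simp flip: exp_of_nat_mult exp_add) (simp add: field_simps)
    then show ?thesis by (simp add: ennreal_power ennreal_mult'' flip: ennreal_mult'')
  qed
  finally show ?thesis .
qed

lemma strict_chernoff:
  assumes P: "prob_space M" and Y[measurable]: "Y \<in> borel_measurable M" and l: "l > 0"
    and B: "(\<integral>\<^sup>+x. ennreal (exp (l * Y x)) \<partial>M) \<le> ennreal B"
  shows "measure M {x\<in>space M. Y x > t} < exp (-l*t) * B"
proof -
  interpret prob_space M by fact
  define E where "E = {x\<in>space M. Y x > t}"
  have E[measurable]: "E \<in> sets M" unfolding E_def by measurable
  define W where "W = (\<lambda>x. exp (l * (Y x - t)) - indicator E x)"
  have [measurable]: "W \<in> borel_measurable M" unfolding W_def by measurable
  have Wpos: "W x > 0" if "x \<in> space M" for x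
  proof (cases "x \<in> E")
    case True
    then have "l * (Y x - t) > 0" using l by (simp add: E_def)
    then show ?thesis using True by (simp add: W_def)
  next
    case False then show ?thesis by (simp add: W_def)
  qed
  have Z: "ennreal (exp (l * (Y x - t))) = indicator E x + ennreal (W x)" if "x \<in> space M" for x
  proof (cases "x \<in> E")
    case True
    have "ennreal (exp (l * (Y x - t))) = ennreal (1 + (exp (l * (Y x - t)) - 1))" by simp
    also have "\<dots> = 1 + ennreal (exp (l * (Y x - t)) - 1)"
      using Wpos[OF that] True by (subst ennreal_plus) (auto simp: W_def)
    finally show ?thesis using True by (simp add: W_def)
  qed (simp add: W_def)
  have "(\<integral>\<^sup>+x. ennreal (exp (l * (Y x - t))) \<partial>M) = (\<integral>\<^sup>+x. indicator E x + ennreal (W x) \<partial>M)"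
    by (intro nn_integral_cong) (simp add: Z)
  also have "\<dots> = emeasure M E + (\<integral>\<^sup>+x. ennreal (W x) \<partial>M)"
    by (subst nn_integral_add) auto
  finally have eq1: "(\<integral>\<^sup>+x. ennreal (exp (l * (Y x - t))) \<partial>M) = emeasure M E + (\<integral>\<^sup>+x. ennreal (W x) \<partial>M)" .
  have Wint: "(\<integral>\<^sup>+x. ennreal (W x) \<partial>M) > 0"
  proof (rule ccontr)
    assume "\<not> ?thesis"
    then have "(\<integral>\<^sup>+x. ennreal (W x) \<partial>M) = 0" by (simp add: not_less)
    then have "AE x in M. ennreal (W x) = 0" by (subst (asm) nn_integral_0_iff_AE) auto
    then have "AE x in M. False" by (rule AE_mp) (auto intro!: AE_I2 dest: Wpos)
    then show False by simp
  qed
  have "(\<integral>\<^sup>+x. ennreal (exp (l * (Y x - t))) \<partial>M) = (\<integral>\<^sup>+x. ennreal (exp (-l*t)) * ennreal (exp (l * Y x)) \<partial>M)"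
    by (intro nn_integral_cong) (simp add: ennreal_mult'' exp_diff exp_minus field_simps flip: ennreal_mult'')
  also have "\<dots> = ennreal (exp (-l*t)) * (\<integral>\<^sup>+x. ennreal (exp (l * Y x)) \<partial>M)"
    by (rule nn_integral_cmult) measurable
  also have "\<dots> \<le> ennreal (exp (-l*t)) * ennreal B" by (intro mult_left_mono B) auto
  also have "\<dots> = ennreal (exp (-l*t) * B)" by (simp add: ennreal_mult')
  finally have le: "emeasure M E + (\<integral>\<^sup>+x. ennreal (W x) \<partial>M) \<le> ennreal (exp (-l*t) * B)" using eq1 by simp
  have lt: "ennreal (measure M E) + 0 < ennreal (measure M E) + (\<integral>\<^sup>+x. ennreal (W x) \<partial>M)"
    using Wint by (subst ennreal_add_left_cancel_less) simp
  from le lt have "ennreal (measure M E) < ennreal (exp (-l*t) * B)" unfolding emeasure_eq_measure by (metis add.right_neutral less_le_trans)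
  then show ?thesis unfolding E_def by (metis ennreal_leI not_less)
qed

definition Ysum :: "nat \<Rightarrow> nat \<Rightarrow> ('x \<Rightarrow> real) \<Rightarrow> ('y \<Rightarrow> real) \<Rightarrow> real \<Rightarrow> real \<Rightarrow> (nat \<Rightarrow> 'x) \<times> (nat \<Rightarrow> 'y) \<Rightarrow> real" where
  "Ysum n N f g m1 m2 \<omega> = (\<Sum>k<n. f (fst \<omega> k) - m1) + (\<Sum>j<N. g (snd \<omega> j) - m2)"

lemma hoeff_upper:
  fixes M1 :: "'x measure" and M2 :: "'y measure"
  assumes p1: "prob_space M1" and p2: "prob_space M2"
  and f[measurable]: "f \<in> borel_measurable M1" and g[measurable]: "g \<in> borel_measurable M2"
  and af: "AE x in M1. f x \<in> {a1..b1}" and ag: "AE x in M2. g x \<in> {a2..b2}"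
  and t: "t > 0" and D: "real n * (b1-a1)^2 + real N * (b2-a2)^2 > 0"
  shows "measure (PiM {..<n} (\<lambda>_. M1) \<Otimes>\<^sub>M PiM {..<N} (\<lambda>_. M2))
     {\<omega>\<in>space (PiM {..<n} (\<lambda>_. M1) \<Otimes>\<^sub>M PiM {..<N} (\<lambda>_. M2)). Ysum n N f g (integral\<^sup>L M1 f) (integral\<^sup>L M2 g) \<omega> > t}
     < exp (-2 * t^2 / (real n * (b1-a1)^2 + real N * (b2-a2)^2))"
proof -
  define D where "D = real n * (b1-a1)^2 + real N * (b2-a2)^2"
  define l where "l = 4 * t / D"
  have Dp: "D > 0" using D by (simp add: D_def)
  have l: "l > 0" using t Dp by (simp add: l_def)
  have "measure (PiM {..<n} (\<lambda>_. M1) \<Otimes>\<^sub>M PiM {..<N} (\<lambda>_. M2))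
     {\<omega>\<in>space (PiM {..<n} (\<lambda>_. M1) \<Otimes>\<^sub>M PiM {..<N} (\<lambda>_. M2)). Ysum n N f g (integral\<^sup>L M1 f) (integral\<^sup>L M2 g) \<omega> > t}
     < exp (-l*t) * exp (l^2 * D / 8)"
    apply (rule strict_chernoff)
    apply (intro prob_space_pair prob_space_PiM p1 p2)
    apply (unfold Ysum_def, measurable)[1]
    apply (rule l)
    using mgf_pair[OF p1 p2 f g af ag l, of n N] by (simp add: Ysum_def D_def)
  also have "exp (-l*t) * exp (l^2 * D / 8) = exp (-2 * t^2 / D)"
    using Dp by (simp add: l_def flip: exp_add) (simp add: field_simps power2_eq_square)
  finally show ?thesis by (simp add: D_def)
qed

lemma hoeff_abs:
  fixes M1 :: "'x measure" and M2 :: "'y measure"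
  assumes p1: "prob_space M1" and p2: "prob_space M2"
  and f[measurable]: "f \<in> borel_measurable M1" and g[measurable]: "g \<in> borel_measurable M2"
  and af: "AE x in M1. f x \<in> {a1..b1}" and ag: "AE x in M2. g x \<in> {a2..b2}"
  and t: "t \<ge> 0" and D: "real n * (b1-a1)^2 + real N * (b2-a2)^2 > 0"
  shows "measure (PiM {..<n} (\<lambda>_. M1) \<Otimes>\<^sub>M PiM {..<N} (\<lambda>_. M2))
     {\<omega>\<in>space (PiM {..<n} (\<lambda>_. M1) \<Otimes>\<^sub>M PiM {..<N} (\<lambda>_. M2)). \<bar>Ysum n N f g (integral\<^sup>L M1 f) (integral\<^sup>L M2 g) \<omega>\<bar> > t}
     < 2 * exp (-2 * t^2 / (real n * (b1-a1)^2 + real N * (b2-a2)^2))"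
proof -
  let ?O = "PiM {..<n} (\<lambda>_. M1) \<Otimes>\<^sub>M PiM {..<N} (\<lambda>_. M2)"
  let ?Y = "Ysum n N f g (integral\<^sup>L M1 f) (integral\<^sup>L M2 g)"
  let ?D = "real n * (b1-a1)^2 + real N * (b2-a2)^2"
  interpret O: prob_space ?O by (intro prob_space_pair prob_space_PiM p1 p2)
  show ?thesis
  proof (cases "t = 0")
    case True
    have "O.prob {\<omega>\<in>space ?O. \<bar>?Y \<omega>\<bar> > t} \<le> 1" by simp
    moreover have "2 * exp (-2 * t^2 / ?D) = 2" using True by simp
    ultimately show ?thesis by linarith
  next
    case False
    with t have tp: "t > 0" by simp
    have af': "AE x in M1. - f x \<in> {-b1..-a1}" using af by (rule AE_mp) (auto intro!: AE_I2)
    have ag': "AE x in M2. - g x \<in> {-b2..-a2}" using ag by (rule AE_mp) (auto intro!: AE_I2)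
    have up: "O.prob {\<omega>\<in>space ?O. ?Y \<omega> > t} < exp (-2 * t^2 / ?D)"
      by (rule hoeff_upper[OF p1 p2 f g af ag tp D])
    have lo0: "O.prob {\<omega>\<in>space ?O. Ysum n N (\<lambda>x. - f x) (\<lambda>x. - g x) (integral\<^sup>L M1 (\<lambda>x. - f x)) (integral\<^sup>L M2 (\<lambda>x. - g x)) \<omega> > t}
       < exp (-2 * t^2 / (real n * (-a1 - -b1)^2 + real N * (-a2 - -b2)^2))"
      by (rule hoeff_upper[OF p1 p2 _ _ af' ag' tp]) (use D in \<open>auto simp: power2_commute\<close>)
    have "Ysum n N (\<lambda>x. - f x) (\<lambda>x. - g x) (integral\<^sup>L M1 (\<lambda>x. - f x)) (integral\<^sup>L M2 (\<lambda>x. - g x)) \<omega> = - ?Y \<omega>" for \<omega>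
      by (simp add: Ysum_def sum_negf[symmetric] algebra_simps sum_subtractf)
    then have lo: "O.prob {\<omega>\<in>space ?O. - ?Y \<omega> > t} < exp (-2 * t^2 / ?D)"
      using lo0 by (simp add: power2_commute)
    have "{\<omega>\<in>space ?O. \<bar>?Y \<omega>\<bar> > t} = {\<omega>\<in>space ?O. ?Y \<omega> > t} \<union> {\<omega>\<in>space ?O. - ?Y \<omega> > t}"
      by auto
    then have "O.prob {\<omega>\<in>space ?O. \<bar>?Y \<omega>\<bar> > t} \<le> O.prob {\<omega>\<in>space ?O. ?Y \<omega> > t} + O.prob {\<omega>\<in>space ?O. - ?Y \<omega> > t}"
      by (simp only:) (rule measure_Un_le; unfold Ysum_def; measurable)
    then show ?thesis using up lo by simp
  qed
qed



lemma caseB_alg: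
  fixes n N :: real and c \<Delta> :: real
  assumes n: "n > 0" and N: "N > 0" and d: "\<Delta> > 0" and c: "c > 0" and cond: "\<Delta>^2 * n < c^2"
  defines "D \<equiv> sqrt ((N + n) * c^2 - \<Delta>^2 * N * n)"
  defines "lam \<equiv> (n + N * n * \<Delta> / D) / (N + n)"
  shows "0 < lam" "lam < 1"
    "(1 - lam) * \<Delta> + c * sqrt (n * (lam / n)^2 + N * ((1 - lam) / N)^2) < c / sqrt n"
    "sqrt (n * (lam / n)^2 + N * ((1 - lam) / N)^2) < 1 / sqrt n"
proof -
  have X: "(N + n) * c^2 - \<Delta>^2 * N * n > (\<Delta> * n)^2"
  proof -
    have "(N + n) * c^2 > (N + n) * (\<Delta>^2 * n)" using cond N n by (intro mult_strict_left_mono) auto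
    then show ?thesis by (simp add: algebra_simps power2_eq_square)
  qed
  have D2: "D^2 = (N + n) * c^2 - \<Delta>^2 * N * n" unfolding D_def using X
  proof -
    have "0 \<le> (\<Delta> * n)^2" by simp
    then have "0 \<le> (N + n) * c^2 - \<Delta>^2 * N * n" using X by linarith
    then show "(sqrt ((N + n) * c^2 - \<Delta>^2 * N * n))^2 = (N + n) * c^2 - \<Delta>^2 * N * n" by simp
  qed
  have Dgt: "D > \<Delta> * n" unfolding D_def using X d n
    by (metis abs_of_pos mult_pos_pos real_sqrt_abs real_sqrt_less_mono)
  have Dp: "D > 0" using Dgt d n by (meson less_trans mult_pos_pos)
  show l0: "0 < lam" unfolding lam_def using n N d Dp by (intro divide_pos_pos add_pos_nonneg) auto
  have "N * n * \<Delta> / D < N" using Dgt Dp N by (simp add: field_simps)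
  then show l1: "lam < 1" unfolding lam_def using n N by (simp add: field_simps)
  have lamf: "lam = n * (D + N * \<Delta>) / (D * (N + n))" unfolding lam_def using n N Dp by (simp add: field_simps)
  have e1: "lam / n = (D + N * \<Delta>) / (D * (N + n))" unfolding lamf using n by simp
  have pos: "D * (N + n) > 0" using Dp n N by simp
  have "1 - lam = (D * (N + n) - n * (D + N * \<Delta>)) / (D * (N + n))" unfolding lamf using pos Dp n N
    by (simp add: diff_divide_distrib)
  also have "D * (N + n) - n * (D + N * \<Delta>) = N * (D - n * \<Delta>)" by (simp add: algebra_simps)
  finally have om: "1 - lam = N * (D - n * \<Delta>) / (D * (N + n))" .
  then have e2: "(1 - lam) / N = (D - n * \<Delta>) / (D * (N + n))" using N by simp
  have "n * (lam / n)^2 + N * ((1 - lam) / N)^2 = (n * (D + N * \<Delta>)^2 + N * (D - n * \<Delta>)^2) / (D * (N + n))^2"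
    by (simp only: e1 e2 power_divide times_divide_eq_right add_divide_distrib[symmetric])
  also have "n * (D + N * \<Delta>)^2 + N * (D - n * \<Delta>)^2 = (N + n) * (D^2 + n * N * \<Delta>^2)"
    by (simp add: algebra_simps power2_eq_square)
  also have "D^2 + n * N * \<Delta>^2 = (N + n) * c^2" using D2 by (simp add: algebra_simps)
  also have "(N + n) * ((N + n) * c^2) / (D * (N + n))^2 = (c / D)^2"
    using n N Dp by (simp add: power2_eq_square)
  finally have s: "n * (lam / n)^2 + N * ((1 - lam) / N)^2 = (c / D)^2" .
  have ss: "sqrt (n * (lam / n)^2 + N * ((1 - lam) / N)^2) = c / D" unfolding s using c Dp by simp
  have "(1 - lam) * \<Delta> + c * (c / D) = (N * \<Delta> + D) / (N + n)"
  proof -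
    have a1: "(1 - lam) * \<Delta> = (N * \<Delta> * D - N * n * \<Delta>^2) / (D * (N + n))" 
      by (simp only: om) (simp add: algebra_simps power2_eq_square)
    have "c * (c / D) = ((N + n) * c^2) / (D * (N + n))" using n N Dp
      by (simp add: power2_eq_square)
    also have "(N + n) * c^2 = D^2 + \<Delta>^2 * N * n" using D2 by simp
    finally have a2: "c * (c / D) = (D^2 + \<Delta>^2 * N * n) / (D * (N + n))" .
    have "(1 - lam) * \<Delta> + c * (c / D) = (N * \<Delta> * D + D^2) / (D * (N + n))"
      unfolding a1 a2 by (simp add: add_divide_distrib[symmetric] algebra_simps)
    also have "(N * \<Delta> * D + D^2) = D * (N * \<Delta> + D)" by (simp add: power2_eq_square algebra_simps)
    also have "D * (N * \<Delta> + D) / (D * (N + n)) = (N * \<Delta> + D) / (N + n)" using Dp by simp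
    finally show ?thesis .
  qed
  moreover have "(N * \<Delta> + D) / (N + n) < c / sqrt n"
  proof -
    define q where "q = sqrt n"
    have q: "q > 0" "q^2 = n" using n by (auto simp: q_def)
    have cq: "\<Delta> * q < c" using cond q d c
      by (metis power_mult_distrib power_less_imp_less_base less_le mult_pos_pos) 
    have rhs: "(N + n) * c - q * N * \<Delta> > 0"
    proof -
      have "q * N * \<Delta> < N * c" using cq N by (simp add: algebra_simps)
      also have "\<dots> \<le> (N + n) * c" using n c by simp
      finally show ?thesis by simp
    qed
    have "(q * D)^2 < ((N + n) * c - q * N * \<Delta>)^2"
    proof -
      have qD: "(q * D)^2 = q^2 * ((N + n) * c^2 - \<Delta>^2 * N * n)" using D2 by (simp add: power_mult_distrib)
      have "((N + n) * c - q * N * \<Delta>)^2 - (q * D)^2 = N * (N + n) * (c - q * \<Delta>)^2"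
        unfolding qD using q(2) by (simp add: algebra_simps power2_eq_square) 
      moreover have "N * (N + n) * (c - q * \<Delta>)^2 > 0" 
      proof -
        have "c - q * \<Delta> \<noteq> 0" using cq by (simp add: mult.commute)
        then have "(c - q * \<Delta>)^2 > 0" by simp
        then show ?thesis using N n by simp
      qed
      ultimately show ?thesis by simp
    qed
    then have "q * D < (N + n) * c - q * N * \<Delta>" using rhs q Dp
      by (meson less_le power2_less_imp_less)
    then have "q * (N * \<Delta> + D) < (N + n) * c" by (simp add: algebra_simps)
    then show ?thesis using q n N unfolding q_def[symmetric] by (simp add: field_simps)
  qed
  ultimately show "(1 - lam) * \<Delta> + c * sqrt (n * (lam / n)^2 + N * ((1 - lam) / N)^2) < c / sqrt n"
    unfolding ss by simp
  then have "c * sqrt (n * (lam / n)^2 + N * ((1 - lam) / N)^2) < c * (1 / sqrt n)"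
  proof -
    have "(1 - lam) * \<Delta> > 0" using l1 d by simp
    then show ?thesis using \<open>(1 - lam) * \<Delta> + c * sqrt (n * (lam / n)^2 + N * ((1 - lam) / N)^2) < c / sqrt n\<close> by simp
  qed
  then show "sqrt (n * (lam / n)^2 + N * ((1 - lam) / N)^2) < 1 / sqrt n" using c
    by (metis mult_less_cancel_left_pos times_divide_eq_right mult_1_right)
qed



lemma distr_pair_snd':
  assumes "prob_space M" "prob_space N"
  shows "distr (M \<Otimes>\<^sub>M N) N snd = N"
proof (intro measure_eqI)
  interpret M: prob_space M by fact
  interpret N: prob_space N by fact
  fix A assume A: "A \<in> sets (distr (M \<Otimes>\<^sub>M N) N snd)"
  from A have "emeasure (distr (M \<Otimes>\<^sub>M N) N snd) A = emeasure (M \<Otimes>\<^sub>M N) (space M \<times> A)"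
    by (auto simp add: emeasure_distr space_pair_measure dest: sets.sets_into_space intro!: arg_cong2[where f=emeasure])
  with A show "emeasure (distr (M \<Otimes>\<^sub>M N) N snd) A = emeasure N A"
    by (simp add: N.emeasure_pair_measure_Times M.emeasure_space_1)
qed simp

lemma rew_facts:
  assumes p: "prob_space Rm" and s: "sets Rm = sets borel" and ae: "AE x in Rm. 0 \<le> x \<and> x \<le> 1"
  shows "integrable Rm (\<lambda>x. x)" "0 \<le> mean_reward Rm" "mean_reward Rm \<le> 1"
proof -
  interpret prob_space Rm by fact
  have [measurable]: "(\<lambda>x. x) \<in> borel_measurable Rm" using measurable_ident_sets[OF s] by simp
  interpret B: interval_bounded_random_variable Rm "\<lambda>x. x" 0 1
    by unfold_locales (use ae in auto)
  show i: "integrable Rm (\<lambda>x. x)" by (rule B.integrable)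
  show "0 \<le> mean_reward Rm" unfolding mean_reward_def
    by (rule integral_nonneg_AE) (use ae in auto)
  have "mean_reward Rm \<le> integral\<^sup>L Rm (\<lambda>x. 1)" unfolding mean_reward_def
    by (rule integral_mono_AE) (use ae i in auto)
  then show "mean_reward Rm \<le> 1" using prob_space by simp
qed

lemma pair_integral:
  fixes V :: "'s::finite \<Rightarrow> real"
  assumes p: "prob_space Rm" and s: "sets Rm = sets borel" and ae: "AE x in Rm. 0 \<le> x \<and> x \<le> 1"
  shows "integral\<^sup>L (Rm \<Otimes>\<^sub>M measure_pmf q) (\<lambda>x. \<alpha> * fst x + V (snd x)) = \<alpha> * mean_reward Rm + (\<Sum>s'\<in>UNIV. pmf q s' * V s')"
proof -
  interpret prob_space Rm by fact
  have pq: "prob_space (measure_pmf q)" by (rule prob_space_measure_pmf)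
  have [measurable]: "(\<lambda>x. x) \<in> borel_measurable Rm" using measurable_ident_sets[OF s] by simp
  have i: "integrable Rm (\<lambda>x. x)" by (rule rew_facts[OF p s ae])
  have d1: "distr (Rm \<Otimes>\<^sub>M measure_pmf q) Rm fst = Rm" using pq by (rule prob_space.distr_pair_fst)
  have d2: "distr (Rm \<Otimes>\<^sub>M measure_pmf q) (measure_pmf q) snd = measure_pmf q"
    by (rule distr_pair_snd'[OF p pq])
  have i1: "integrable (Rm \<Otimes>\<^sub>M measure_pmf q) fst"
    using integrable_distr_eq[of fst "Rm \<Otimes>\<^sub>M measure_pmf q" Rm "\<lambda>x. x"] i d1 by simp
  have i2: "integrable (Rm \<Otimes>\<^sub>M measure_pmf q) (\<lambda>x. V (snd x))"
    using integrable_distr_eq[of snd "Rm \<Otimes>\<^sub>M measure_pmf q" "measure_pmf q" V] d2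
    by (simp add: integrable_measure_pmf_finite)
  have "integral\<^sup>L (Rm \<Otimes>\<^sub>M measure_pmf q) (\<lambda>x. \<alpha> * fst x + V (snd x))
      = \<alpha> * integral\<^sup>L (Rm \<Otimes>\<^sub>M measure_pmf q) fst + integral\<^sup>L (Rm \<Otimes>\<^sub>M measure_pmf q) (\<lambda>x. V (snd x))"
    using i1 i2 by simp
  also have "integral\<^sup>L (Rm \<Otimes>\<^sub>M measure_pmf q) fst = mean_reward Rm"
    using integral_distr[of fst "Rm \<Otimes>\<^sub>M measure_pmf q" Rm "\<lambda>x. x"] d1 by (simp add: mean_reward_def)
  also have "integral\<^sup>L (Rm \<Otimes>\<^sub>M measure_pmf q) (\<lambda>x. V (snd x)) = integral\<^sup>L (measure_pmf q) V"
    using integral_distr[of snd "Rm \<Otimes>\<^sub>M measure_pmf q" "measure_pmf q" V] d2 by simp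
  also have "integral\<^sup>L (measure_pmf q) V = (\<Sum>s'\<in>UNIV. pmf q s' * V s')"
    by (subst integral_measure_pmf_real[where A=UNIV]) (auto simp: mult.commute)
  finally show ?thesis .
qed

lemma pair_AE:
  fixes V :: "'s::finite \<Rightarrow> real"
  assumes p: "prob_space Rm" and s: "sets Rm = sets borel" and ae: "AE x in Rm. 0 \<le> x \<and> x \<le> 1"
    and a: "0 \<le> \<alpha>" and V: "\<And>s'. 0 \<le> V s' \<and> \<alpha> + V s' \<le> K" and that: "0 \<le> w"
  shows "AE x in Rm \<Otimes>\<^sub>M measure_pmf q. w * (\<alpha> * fst x + V (snd x)) \<in> {0 .. w * K}"
proof -
  have pq: "prob_space (measure_pmf q)" by (rule prob_space_measure_pmf)
  have [measurable]: "(\<lambda>x. x) \<in> borel_measurable Rm" using measurable_ident_sets[OF s] by simp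
  have d1: "distr (Rm \<Otimes>\<^sub>M measure_pmf q) Rm fst = Rm" using pq by (rule prob_space.distr_pair_fst)
  have ae1: "AE x in distr (Rm \<Otimes>\<^sub>M measure_pmf q) Rm fst. 0 \<le> x \<and> x \<le> 1" by (subst d1) (rule ae)
  have [measurable]: "{x \<in> space Rm. 0 \<le> x \<and> x \<le> 1} \<in> sets Rm" by measurable
  have "AE x in Rm \<Otimes>\<^sub>M measure_pmf q. 0 \<le> fst x \<and> fst x \<le> 1"
    using ae1 by (subst (asm) AE_distr_iff) auto
  then show ?thesis
  proof (rule AE_mp, intro AE_I2 impI)
    fix x :: "real \<times> 's" assume x: "0 \<le> fst x \<and> fst x \<le> 1"
    have "0 \<le> \<alpha> * fst x + V (snd x)" using x a V[of "snd x"] by simp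
    moreover have "\<alpha> * fst x + V (snd x) \<le> K" using x a V[of "snd x"]
      by (smt (verit) mult_left_le)
    ultimately show "w * (\<alpha> * fst x + V (snd x)) \<in> {0 .. w * K}" using that
      by (auto intro: mult_left_mono)
  qed
qed

lemma emp_identity:
  fixes V :: "'s::finite \<Rightarrow> real"
  shows "(\<Sum>s'\<in>UNIV. emp_dist m \<omega> s' * V s') = (\<Sum>k<m. V (snd (\<omega> k))) / real m"
proof -
  have "(\<Sum>k<m. V (snd (\<omega> k))) = (\<Sum>s'\<in>UNIV. \<Sum>k\<in>{k\<in>{..<m}. snd (\<omega> k) = s'}. V (snd (\<omega> k)))"
    by (rule sum.group[symmetric]) auto
  also have "\<dots> = (\<Sum>s'\<in>UNIV. real (card {k. k < m \<and> snd (\<omega> k) = s'}) * V s')"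
    by (intro sum.cong refl) (simp add: Collect_conj_eq[symmetric])
  finally show ?thesis
    by (simp add: emp_dist_def sum_divide_distrib)
qed

lemma Qrem_bounds:
  assumes "\<And>h s a. 0 \<le> r h s a \<and> r h s a \<le> 1"
  shows "0 \<le> Qrem r P m h s a \<and> Qrem r P m h s a \<le> real m"
proof (induction m arbitrary: h s a)
  case 0 then show ?case by simp
next
  case (Suc m)
  define M where "M = (\<lambda>s'. MAX y\<in>UNIV. Qrem r P m (Suc h) s' y)"
  have M: "0 \<le> M s' \<and> M s' \<le> real m" for s'
    unfolding M_def using Suc.IH by (auto simp: Max_ge_iff Max_le_iff)
  have "(\<Sum>s'\<in>UNIV. pmf (P h s a) s' * M s') \<le> (\<Sum>s'\<in>UNIV. pmf (P h s a) s' * real m)"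
    by (intro sum_mono mult_left_mono) (auto simp: M)
  also have "\<dots> = real m" by (simp add: sum_distrib_right[symmetric] sum_pmf_eq_1)
  finally have up: "(\<Sum>s'\<in>UNIV. pmf (P h s a) s' * M s') \<le> real m" .
  have lo: "0 \<le> (\<Sum>s'\<in>UNIV. pmf (P h s a) s' * M s')" by (intro sum_nonneg mult_nonneg_nonneg) (auto simp: M)
  show ?case using up lo assms[of h s a] unfolding M_def by simp
qed

lemma Vstar_bounds:
  assumes "\<And>h s a. 0 \<le> r h s a \<and> r h s a \<le> 1" and hH: "h \<le> H"
  shows "0 \<le> Vstar H r P (h + 1) s' \<and> Vstar H r P (h + 1) s' \<le> real H - real h"
proof -
  have Q: "0 \<le> Qrem r P m h' s'' y \<and> Qrem r P m h' s'' y \<le> real m" for m h' s'' y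
    by (rule Qrem_bounds) (rule assms)
  have "0 \<le> Qstar H r P (h+1) s' y \<and> Qstar H r P (h+1) s' y \<le> real H - real h" for y
    using Q[of "H + 1 - (h + 1)" "h+1" s' y] hH unfolding Qstar_def by (auto simp: of_nat_diff)
  then show ?thesis unfolding Vstar_def by (auto simp: Max_ge_iff Max_le_iff)
qed

lemma est_part:
  fixes V :: "'s::finite \<Rightarrow> real"
  shows "c * (\<alpha> * emp_reward m w + (\<Sum>s'\<in>UNIV. emp_dist m w s' * V s'))
    = (\<Sum>k<m. (c / real m) * (\<alpha> * fst (w k) + V (snd (w k))))"
  unfolding emp_identity emp_reward_def
  by (simp add: sum_divide_distrib[symmetric] sum.distrib sum_distrib_left algebra_simps)

lemma conc:
  fixes Rt R0t :: "real measure" and Pt P0t :: "'s::finite pmf" and V :: "'s \<Rightarrow> real" and n N :: nat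
  assumes pR: "prob_space Rt" and sR: "sets Rt = sets borel" and aR: "AE x in Rt. 0 \<le> x \<and> x \<le> 1"
    and p0: "prob_space R0t" and s0: "sets R0t = sets borel" and a0: "AE x in R0t. 0 \<le> x \<and> x \<le> 1"
    and a: "0 \<le> \<alpha>" and V: "\<And>s'. 0 \<le> V s' \<and> \<alpha> + V s' \<le> K" and K: "K > 0"
    and n: "n \<ge> 1" and lam0: "0 < lam" and lam1: "lam \<le> 1"
  defines "\<Omega> \<equiv> sample_space n N Rt Pt R0t P0t"
    and "Est \<equiv> \<lambda>\<omega>. \<alpha> * (lam * emp_reward n (fst \<omega>) + (1 - lam) * emp_reward N (snd \<omega>))
        + (\<Sum>s'\<in>UNIV. (lam * emp_dist n (fst \<omega>) s' + (1 - lam) * emp_dist N (snd \<omega>) s') * V s')"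
    and "mu \<equiv> real n * (lam / real n) * (\<alpha> * mean_reward Rt + (\<Sum>s'\<in>UNIV. pmf Pt s' * V s'))
        + real N * ((1 - lam) / real N) * (\<alpha> * mean_reward R0t + (\<Sum>s'\<in>UNIV. pmf P0t s' * V s'))"
    and "\<sigma>2 \<equiv> real n * (lam / real n)^2 + real N * ((1 - lam) / real N)^2"
  shows "Est \<in> borel_measurable \<Omega>"
    and "t \<ge> 0 \<Longrightarrow> measure \<Omega> {\<omega>\<in>space \<Omega>. \<bar>Est \<omega> - mu\<bar> > t} < 2 * exp (-2 * t^2 / (K^2 * \<sigma>2))"
    and "t \<ge> 0 \<Longrightarrow> measure \<Omega> {\<omega>\<in>space \<Omega>. Est \<omega> - mu > t} \<le> exp (-2 * t^2 / (K^2 * \<sigma>2))"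
proof -
  define M1 where "M1 = Rt \<Otimes>\<^sub>M measure_pmf Pt"
  define M2 where "M2 = R0t \<Otimes>\<^sub>M measure_pmf P0t"
  have O: "\<Omega> = PiM {..<n} (\<lambda>_. M1) \<Otimes>\<^sub>M PiM {..<N} (\<lambda>_. M2)"
    unfolding \<Omega>_def sample_space_def M1_def M2_def ..
  have pM1: "prob_space M1" unfolding M1_def by (intro prob_space_pair pR prob_space_measure_pmf)
  have pM2: "prob_space M2" unfolding M2_def by (intro prob_space_pair p0 prob_space_measure_pmf)
  define w1 where "w1 = lam / real n"
  define w2 where "w2 = (1 - lam) / real N"
  have w1: "0 \<le> w1" unfolding w1_def using lam0 by simp
  have w2: "0 \<le> w2" unfolding w2_def using lam1 by simp
  define f where "f = (\<lambda>x::real \<times> 's. w1 * (\<alpha> * fst x + V (snd x)))"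
  define g where "g = (\<lambda>x::real \<times> 's. w2 * (\<alpha> * fst x + V (snd x)))"
  have [measurable]: "(\<lambda>x. x) \<in> borel_measurable Rt" using measurable_ident_sets[OF sR] by simp
  have [measurable]: "(\<lambda>x. x) \<in> borel_measurable R0t" using measurable_ident_sets[OF s0] by simp
  have [measurable]: "(\<lambda>x. V (snd x)) \<in> borel_measurable (Rt \<Otimes>\<^sub>M measure_pmf Pt)"
    by (rule measurable_compose[OF measurable_snd]) simp
  have [measurable]: "(\<lambda>x. V (snd x)) \<in> borel_measurable (R0t \<Otimes>\<^sub>M measure_pmf P0t)"
    by (rule measurable_compose[OF measurable_snd]) simp
  have [measurable]: "(\<lambda>x. fst x) \<in> borel_measurable (Rt \<Otimes>\<^sub>M measure_pmf Pt)"
    by (rule measurable_compose[OF measurable_fst]) simp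
  have [measurable]: "(\<lambda>x. fst x) \<in> borel_measurable (R0t \<Otimes>\<^sub>M measure_pmf P0t)"
    by (rule measurable_compose[OF measurable_fst]) simp
  have fm[measurable]: "f \<in> borel_measurable M1" unfolding f_def M1_def by measurable
  have gm[measurable]: "g \<in> borel_measurable M2" unfolding g_def M2_def by measurable
  have af: "AE x in M1. f x \<in> {0 .. w1 * K}" unfolding f_def M1_def by (rule pair_AE[OF pR sR aR a V w1])
  have ag: "AE x in M2. g x \<in> {0 .. w2 * K}" unfolding g_def M2_def by (rule pair_AE[OF p0 s0 a0 a V w2])
  have intf: "integral\<^sup>L M1 f = w1 * (\<alpha> * mean_reward Rt + (\<Sum>s'\<in>UNIV. pmf Pt s' * V s'))"
    unfolding f_def M1_def integral_mult_right_zero by (simp add: pair_integral[OF pR sR aR])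
  have intg: "integral\<^sup>L M2 g = w2 * (\<alpha> * mean_reward R0t + (\<Sum>s'\<in>UNIV. pmf P0t s' * V s'))"
    unfolding g_def M2_def integral_mult_right_zero by (simp add: pair_integral[OF p0 s0 a0])
  have EstY: "Est \<omega> - mu = Ysum n N f g (integral\<^sup>L M1 f) (integral\<^sup>L M2 g) \<omega>" for \<omega>
  proof -
    have "Est \<omega> = lam * (\<alpha> * emp_reward n (fst \<omega>) + (\<Sum>s'\<in>UNIV. emp_dist n (fst \<omega>) s' * V s'))
       + (1 - lam) * (\<alpha> * emp_reward N (snd \<omega>) + (\<Sum>s'\<in>UNIV. emp_dist N (snd \<omega>) s' * V s'))"
    proof -
      have "(\<Sum>s'\<in>UNIV. (lam * emp_dist n (fst \<omega>) s' + (1 - lam) * emp_dist N (snd \<omega>) s') * V s')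
        = lam * (\<Sum>s'\<in>UNIV. emp_dist n (fst \<omega>) s' * V s') + (1 - lam) * (\<Sum>s'\<in>UNIV. emp_dist N (snd \<omega>) s' * V s')"
        by (simp add: distrib_right sum.distrib sum_distrib_left mult.assoc)
      then show ?thesis unfolding Est_def by (simp add: distrib_left)
    qed
    also have "\<dots> = (\<Sum>k<n. f (fst \<omega> k)) + (\<Sum>j<N. g (snd \<omega> j))"
      unfolding est_part f_def g_def w1_def w2_def ..
    finally show ?thesis
      unfolding Ysum_def sum_subtractf intf intg mu_def w1_def w2_def by simp
  qed
  have D: "real n * (w1 * K - 0)^2 + real N * (w2 * K - 0)^2 = K^2 * \<sigma>2"
    unfolding \<sigma>2_def w1_def[symmetric] w2_def[symmetric] by (simp add: power_mult_distrib distrib_left mult.commute mult.left_commute)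
  have \<sigma>pos: "\<sigma>2 > 0" unfolding \<sigma>2_def using n lam0
    by (intro add_pos_nonneg) (auto simp: power_divide)
  have Dpos: "real n * (w1 * K - 0)^2 + real N * (w2 * K - 0)^2 > 0" unfolding D using K \<sigma>pos by simp
  have Ym: "Ysum n N f g (integral\<^sup>L M1 f) (integral\<^sup>L M2 g) \<in> borel_measurable \<Omega>"
    unfolding O Ysum_def by measurable
  show "Est \<in> borel_measurable \<Omega>"
  proof -
    have "(\<lambda>\<omega>. Ysum n N f g (integral\<^sup>L M1 f) (integral\<^sup>L M2 g) \<omega> + mu) \<in> borel_measurable \<Omega>"
      using Ym by measurable
    moreover have "(\<lambda>\<omega>. Ysum n N f g (integral\<^sup>L M1 f) (integral\<^sup>L M2 g) \<omega> + mu) = Est"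
      using EstY by (auto simp: fun_eq_iff algebra_simps)
    ultimately show ?thesis by simp
  qed
  show "measure \<Omega> {\<omega>\<in>space \<Omega>. \<bar>Est \<omega> - mu\<bar> > t} < 2 * exp (-2 * t^2 / (K^2 * \<sigma>2))" if t: "t \<ge> 0" for t
    using hoeff_abs[OF pM1 pM2 fm gm af ag t Dpos] unfolding O[symmetric] EstY[symmetric] D .
  show "measure \<Omega> {\<omega>\<in>space \<Omega>. Est \<omega> - mu > t} \<le> exp (-2 * t^2 / (K^2 * \<sigma>2))" if t: "t \<ge> 0" for t
  proof (cases "t = 0")
    case True
    interpret O: prob_space \<Omega> unfolding O by (intro prob_space_pair prob_space_PiM pM1 pM2)
    show ?thesis using True by simp
  next
    case False
    then have tp: "t > 0" using t by simp
    show ?thesis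
      using hoeff_upper[OF pM1 pM2 fm gm af ag tp Dpos] unfolding O[symmetric] EstY[symmetric] D by simp
  qed
qed

lemma shift_bound:
  fixes X :: "'a \<Rightarrow> real"
  assumes "prob_space \<Omega>" and Xm[measurable]: "X \<in> borel_measurable \<Omega>" and b: "\<bar>mu - E\<bar> \<le> b"
    and B: "measure \<Omega> {\<omega>\<in>space \<Omega>. \<bar>X \<omega> - mu\<bar> > t} < B"
  shows "measure \<Omega> {\<omega>\<in>space \<Omega>. \<bar>X \<omega> - E\<bar> > b + t} < B"
proof -
  have fm: "(\<lambda>x. \<bar>X x - mu\<bar>) \<in> borel_measurable \<Omega>" by measurable
  have sm: "{\<omega>\<in>space \<Omega>. \<bar>X \<omega> - mu\<bar> > t} \<in> sets \<Omega>"
    using measurable_sets[OF fm, of "{t<..}"] by (simp add: vimage_def Int_def conj_commute)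
  interpret prob_space \<Omega> by fact
  have "measure \<Omega> {\<omega>\<in>space \<Omega>. \<bar>X \<omega> - E\<bar> > b + t} \<le> measure \<Omega> {\<omega>\<in>space \<Omega>. \<bar>X \<omega> - mu\<bar> > t}"
  proof (rule finite_measure_mono)
    show "{\<omega>\<in>space \<Omega>. \<bar>X \<omega> - mu\<bar> > t} \<in> events" by (rule sm)
    show "{\<omega>\<in>space \<Omega>. \<bar>X \<omega> - E\<bar> > b + t} \<subseteq> {\<omega>\<in>space \<Omega>. \<bar>X \<omega> - mu\<bar> > t}"
    proof safe
      fix x assume "x \<in> space \<Omega>" "b + t < \<bar>X x - E\<bar>"
      moreover have "\<bar>X x - E\<bar> \<le> \<bar>X x - mu\<bar> + \<bar>mu - E\<bar>" by (rule abs_triangle_ineq[of "X x - mu" "mu - E", simplified])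
      ultimately show "t < \<bar>X x - mu\<bar>" using b by linarith
    qed
  qed
  then show ?thesis using B by simp
qed



theorem theorem1:
  fixes H T n N :: nat and \<delta> \<Delta> :: real
    and R R0 :: "nat \<Rightarrow> 's::finite \<Rightarrow> 'a::finite \<Rightarrow> real measure"
    and P P0 :: "nat \<Rightarrow> 's \<Rightarrow> 'a \<Rightarrow> 's pmf"
    and h :: nat and s :: 's and a :: 'a
  defines "L \<equiv> ln (2 * real H * real CARD('s) * real CARD('a) * real T / \<delta>)"
  defines "r \<equiv> (\<lambda>h s a. mean_reward (R h s a))"
  defines "r0 \<equiv> (\<lambda>h s a. mean_reward (R0 h s a))"
  assumes "H > 0" and "T > 0" and "\<delta> > 0"
    and "\<delta> \<le> 2 * real H * real CARD('s) * real CARD('a) * real T"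
    and "\<And>h s a. prob_space (R h s a)" and "\<And>h s a. sets (R h s a) = sets borel"
    and "\<And>h s a. AE x in R h s a. 0 \<le> x \<and> x \<le> 1"
    and "\<And>h s a. prob_space (R0 h s a)" and "\<And>h s a. sets (R0 h s a) = sets borel"
    and "\<And>h s a. AE x in R0 h s a. 0 \<le> x \<and> x \<le> 1"
    and "\<Delta> > 0"
    and "\<And>h s a. h \<in> {1..H} \<Longrightarrow> \<bar>r h s a - r0 h s a\<bar> \<le> \<Delta>"
    and "\<And>h s a. h \<in> {1..H} \<Longrightarrow> (\<Sum>s'\<in>UNIV. \<bar>pmf (P h s a) s' - pmf (P0 h s a) s'\<bar>) \<le> \<Delta>"
    and "h \<in> {1..H}" and "n \<ge> 1"
  shows "\<exists>eR eP eV.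
     let \<Omega> = sample_space n N (R h s a) (P h s a) (R0 h s a) (P0 h s a);
         V = Vstar H r P (h + 1);
         bnd = \<delta> / (real H * real CARD('s) * real CARD('a) * real T)
     in 0 \<le> eR \<and> 0 \<le> eP \<and> 0 \<le> eV
      \<and> measure \<Omega> {\<omega> \<in> space \<Omega>. \<bar>r_DP L \<Delta> n N \<omega> - r h s a\<bar> > eR} < bnd
      \<and> measure \<Omega> {\<omega> \<in> space \<Omega>.
            (\<Sum>s'\<in>UNIV. \<bar>P_DP L \<Delta> n N \<omega> s' - pmf (P h s a) s'\<bar>) > eP} < bnd
      \<and> measure \<Omega> {\<omega> \<in> space \<Omega>.
            \<bar>r_DP L \<Delta> n N \<omega> - r h s a
              + (\<Sum>s'\<in>UNIV. (P_DP L \<Delta> n N \<omega> s' - pmf (P h s a) s') * V s')\<bar> > eV} < bnd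
      \<and> eR \<le> sqrt (L / (2 * real n))
      \<and> eP \<le> sqrt (2 * (real CARD('s) * ln 2 + L) / real n)
      \<and> eV \<le> real H * sqrt (L / (2 * real n))
      \<and> (real n < L / (2 * \<Delta>^2) \<and> N \<ge> 1 \<longrightarrow>
           eR < sqrt (L / (2 * real n))
         \<and> eP < sqrt (2 * (real CARD('s) * ln 2 + L) / real n)
         \<and> eV < real H * sqrt (L / (2 * real n)))"

proof -
  let ?S = "real CARD('s)"
  let ?Z = "2 * real H * real CARD('s) * real CARD('a) * real T"
  define Rt where "Rt = R h s a"
  define R0t where "R0t = R0 h s a"
  define Pt where "Pt = P h s a"
  define P0t where "P0t = P0 h s a"
  define \<Omega> where "\<Omega> = sample_space n N Rt Pt R0t P0t"
  define V where "V = Vstar H r P (h + 1)"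
  define bnd where "bnd = \<delta> / (real H * real CARD('s) * real CARD('a) * real T)"
  have hH: "1 \<le> h" "h \<le> H" using assms(17) by auto
  have n1: "n \<ge> 1" using assms(18) .
  have Zpos: "?Z > 0" using assms(4,5) by simp
  have Z\<delta>: "?Z / \<delta> \<ge> 1" using assms(6,7) by simp
  have L0: "L \<ge> 0" unfolding L_def using Z\<delta> by simp
  have eL: "exp L = ?Z / \<delta>" unfolding L_def using Zpos assms(6)
    by (intro exp_ln divide_pos_pos) auto
  have expL: "exp (-L) = \<delta> / ?Z" by (simp add: exp_minus eL)
  have bnd: "bnd = 2 * exp (-L)" unfolding bnd_def expL using Zpos by (simp add: field_simps)
  have bndpos: "exp (-L) > 0" by simp
  have pR: "prob_space Rt" "sets Rt = sets borel" "AE x in Rt. 0 \<le> x \<and> x \<le> 1"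
    unfolding Rt_def using assms(8-10) by auto
  have p0: "prob_space R0t" "sets R0t = sets borel" "AE x in R0t. 0 \<le> x \<and> x \<le> 1"
    unfolding R0t_def using assms(11-13) by auto
  have rb: "0 \<le> r h' s' a' \<and> r h' s' a' \<le> 1" for h' s' a'
    unfolding r_def using rew_facts[OF assms(8-10)] by auto
  have Vb: "0 \<le> V s' \<and> V s' \<le> real H - 1" for s'
    using Vstar_bounds[where r=r and P=P and h=h and H=H and s'=s', OF rb hH(2)] hH unfolding V_def by auto
  have d: "\<Delta> > 0" using assms(14) .
  have dr: "\<bar>r h s a - r0 h s a\<bar> \<le> \<Delta>" using assms(15,17) by auto
  have dP: "(\<Sum>s'\<in>UNIV. \<bar>pmf (P h s a) s' - pmf (P0 h s a) s'\<bar>) \<le> \<Delta>" using assms(16,17) by auto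
  define lam where "lam = lambda_DP L \<Delta> n N"
  define \<sigma>2 where "\<sigma>2 = real n * (lam / real n)^2 + real N * ((1 - lam) / real N)^2"
  define c where "c = sqrt (L / 2)"
  define sq where "sq = sqrt \<sigma>2"
  define k where "k = sqrt (2 * (?S * ln 2 + L))"
  have c2: "c^2 = L / 2" unfolding c_def using L0 by simp
  have c0: "c \<ge> 0" unfolding c_def using L0 by simp
  have kc: "c \<le> k" unfolding c_def k_def using L0 by (intro real_sqrt_le_mono) simp
  have k2: "k^2 = 2 * (?S * ln 2 + L)" unfolding k_def using L0 by simp
  have cn: "c / sqrt (real n) = sqrt (L / (2 * real n))" unfolding c_def by (simp add: real_sqrt_divide real_sqrt_mult)
  have kn: "k / sqrt (real n) = sqrt (2 * (?S * ln 2 + L) / real n)" unfolding k_def by (simp add: real_sqrt_divide)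
  define caseB where "caseB = (real n < L / (2 * \<Delta>^2) \<and> N \<ge> 1)"
  have lamfacts: "0 < lam \<and> lam \<le> 1 \<and> (N = 0 \<longrightarrow> lam = 1)
      \<and> (1 - lam) * \<Delta> + c * sq \<le> c / sqrt (real n) \<and> sq \<le> 1 / sqrt (real n)
      \<and> (caseB \<longrightarrow> (1 - lam) * \<Delta> + c * sq < c / sqrt (real n) \<and> sq < 1 / sqrt (real n))"
  proof (cases caseB)
    case True
    then have N1: "N \<ge> 1" and cond0: "real n < L / (2 * \<Delta>^2)" by (auto simp: caseB_def)
    have cond: "\<Delta>^2 * real n < c^2" using cond0 d unfolding c2 by (simp add: field_simps)
    have "\<Delta>^2 * real n > 0" using d n1 by simp
    then have "c^2 > 0" using cond by linarith
    then have "c \<noteq> 0" by auto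
    then have cpos: "c > 0" using c0 by simp
    have lamd: "lam = (real n + real N * real n * \<Delta> / sqrt ((real N + real n) * c^2 - \<Delta>^2 * real N * real n)) / (real N + real n)"
      unfolding lam_def lambda_DP_def c2 using cond0 by simp
    note B = caseB_alg[of "real n" "real N" \<Delta> c, OF _ _ d cpos cond, folded lamd]
    have "real n > 0" "real N > 0" using n1 N1 by auto
    note B = B[OF this]
    show ?thesis using B True N1 unfolding sq_def \<sigma>2_def by auto
  next
    case False
    have l1: "lam = 1"
    proof (cases "real n < L / (2 * \<Delta>^2)")
      case True
      then have "N = 0" using False by (simp add: caseB_def)
      then show ?thesis unfolding lam_def lambda_DP_def using True n1 by simp
    qed (simp add: lam_def lambda_DP_def)
    have s1: "sq = 1 / sqrt (real n)" unfolding sq_def \<sigma>2_def l1 using n1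
      by (simp add: power2_eq_square real_sqrt_divide)
    show ?thesis using False l1 s1 by simp
  qed
  have lam0: "0 < lam" and lam1: "lam \<le> 1" and lamN: "N = 0 \<Longrightarrow> lam = 1" using lamfacts by auto
  have \<sigma>pos: "\<sigma>2 > 0" unfolding \<sigma>2_def using n1 lam0
    by (intro add_pos_nonneg) (auto simp: power_divide)
  have sq2: "sq^2 = \<sigma>2" unfolding sq_def using \<sigma>pos by simp
  have sq0: "sq \<ge> 0" unfolding sq_def using \<sigma>pos by simp
  define eR where "eR = (1 - lam) * \<Delta> + c * sq"
  define eV where "eV = real H * eR"
  define eP where "eP = (1 - lam) * \<Delta> + k * sq"
  have eR0: "0 \<le> eR" unfolding eR_def using lam1 d c0 sq0 by simp
  have eP0: "0 \<le> eP" unfolding eP_def using lam1 d c0 kc sq0 by simp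
  have eV0: "0 \<le> eV" unfolding eV_def using eR0 by simp
  have eRle: "eR \<le> sqrt (L / (2 * real n))" unfolding eR_def cn[symmetric] using lamfacts by simp
  have eVle: "eV \<le> real H * sqrt (L / (2 * real n))" unfolding eV_def using eRle by (simp add: mult_left_mono)
  have ePle: "eP \<le> sqrt (2 * (?S * ln 2 + L) / real n)"
  proof -
    have a1: "(1 - lam) * \<Delta> \<le> c * (1 / sqrt (real n) - sq)" using lamfacts by (simp add: algebra_simps)
    have "c * (1 / sqrt (real n) - sq) \<le> k * (1 / sqrt (real n) - sq)"
      using lamfacts kc by (intro mult_right_mono) auto
    then show ?thesis unfolding eP_def kn[symmetric] using a1 by (simp add: algebra_simps)
  qed
  have strict: "caseB \<longrightarrow> eR < sqrt (L / (2 * real n)) \<and> eP < sqrt (2 * (?S * ln 2 + L) / real n)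
        \<and> eV < real H * sqrt (L / (2 * real n))"
  proof
    assume cB: caseB
    have r1: "eR < sqrt (L / (2 * real n))" unfolding eR_def cn[symmetric] using lamfacts cB by simp
    have a1: "(1 - lam) * \<Delta> < c * (1 / sqrt (real n) - sq)" using lamfacts cB by (simp add: algebra_simps)
    have "c * (1 / sqrt (real n) - sq) \<le> k * (1 / sqrt (real n) - sq)"
      using lamfacts kc by (intro mult_right_mono) auto
    then have r2: "eP < sqrt (2 * (?S * ln 2 + L) / real n)" unfolding eP_def kn[symmetric] using a1 by (simp add: algebra_simps)
    have r3: "eV < real H * sqrt (L / (2 * real n))" unfolding eV_def using r1 assms(4) by simp
    show "eR < sqrt (L / (2 * real n)) \<and> eP < sqrt (2 * (?S * ln 2 + L) / real n)
        \<and> eV < real H * sqrt (L / (2 * real n))" using r1 r2 r3 by simp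
  qed
  have O: "prob_space \<Omega>" unfolding \<Omega>_def sample_space_def
    by (intro prob_space_pair prob_space_PiM prob_space_measure_pmf pR(1) p0(1))
  have rdp: "r_DP L \<Delta> n N \<omega> = 1 * (lam * emp_reward n (fst \<omega>) + (1 - lam) * emp_reward N (snd \<omega>))
        + (\<Sum>s'\<in>UNIV. (lam * emp_dist n (fst \<omega>) s' + (1 - lam) * emp_dist N (snd \<omega>) s') * 0)" for \<omega>
    unfolding r_DP_def lam_def by simp
  define muR where "muR = real n * (lam / real n) * (1 * mean_reward Rt + (\<Sum>s'\<in>UNIV. pmf Pt s' * 0))
        + real N * ((1 - lam) / real N) * (1 * mean_reward R0t + (\<Sum>s'\<in>UNIV. pmf P0t s' * (0::real)))"
  have CR1: "(\<lambda>\<omega>. r_DP L \<Delta> n N \<omega>) \<in> borel_measurable \<Omega>"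
    unfolding rdp \<Omega>_def
    by (rule conc(1)[where \<alpha>=1 and V="\<lambda>_. 0" and K=1, OF pR p0]) (use n1 lam0 lam1 in auto)
  have CR2: "measure \<Omega> {\<omega>\<in>space \<Omega>. \<bar>r_DP L \<Delta> n N \<omega> - muR\<bar> > c * sq} < 2 * exp (-2 * (c * sq)^2 / (1^2 * \<sigma>2))"
    unfolding rdp \<Omega>_def muR_def \<sigma>2_def
    by (rule conc(2)[where \<alpha>=1 and V="\<lambda>_. 0" and K=1, OF pR p0]) (use n1 lam0 lam1 c0 sq0 in auto)
  have ex: "2 * exp (-2 * (c * sq)^2 / (1^2 * \<sigma>2)) = bnd"
    unfolding bnd power_mult_distrib sq2 c2 using \<sigma>pos by simp
  have wn: "real n * (lam / real n) = lam" using n1 by simp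
  have wN: "N \<noteq> 0 \<Longrightarrow> real N * ((1 - lam) / real N) = 1 - lam" by simp
  have biasR: "\<bar>muR - r h s a\<bar> \<le> (1 - lam) * \<Delta>"
  proof (cases "N = 0")
    case True
    then show ?thesis using lamN n1 unfolding muR_def r_def Rt_def by simp
  next
    case False
    then have "muR - r h s a = (1 - lam) * (r0 h s a - r h s a)"
      unfolding muR_def r_def r0_def Rt_def R0t_def wn wN[OF False] by (simp add: algebra_simps)
    then show ?thesis using dr lam1 by (simp add: abs_mult abs_minus_commute mult_left_mono)
  qed
  have probR: "measure \<Omega> {\<omega> \<in> space \<Omega>. \<bar>r_DP L \<Delta> n N \<omega> - r h s a\<bar> > eR} < bnd"
    using shift_bound[OF O CR1 biasR CR2] unfolding ex eR_def .
  define tP where "tP = k * sq / 2"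
  have tP0: "tP \<ge> 0" unfolding tP_def using kc c0 sq0 by simp
  define EA where "EA = (\<lambda>(A::'s set) \<omega>. 0 * (lam * emp_reward n (fst \<omega>) + (1 - lam) * emp_reward N (snd \<omega>))
        + (\<Sum>s'\<in>UNIV. (lam * emp_dist n (fst \<omega>) s' + (1 - lam) * emp_dist N (snd \<omega>) s') * indicator A s'))"
  define muA where "muA = (\<lambda>(A::'s set). real n * (lam / real n) * (0 * mean_reward Rt + (\<Sum>s'\<in>UNIV. pmf Pt s' * indicator A s'))
        + real N * ((1 - lam) / real N) * (0 * mean_reward R0t + (\<Sum>s'\<in>UNIV. pmf P0t s' * indicator A s')))"
  have VA: "0 \<le> (indicator A s' :: real) \<and> 0 + indicator A s' \<le> (1::real)" for A s' by (simp add: indicator_def)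
  have CA1: "EA A \<in> borel_measurable \<Omega>" for A
    unfolding \<Omega>_def EA_def
    by (rule conc(1)[where \<alpha>=0 and V="indicator A" and K=1, OF pR p0]) (use n1 lam0 lam1 VA in auto)
  have CA2: "measure \<Omega> {\<omega>\<in>space \<Omega>. EA A \<omega> - muA A > tP} \<le> exp (-2 * tP^2 / (1^2 * \<sigma>2))" for A
    unfolding \<Omega>_def EA_def muA_def \<sigma>2_def
    by (rule conc(3)[where \<alpha>=0 and V="indicator A" and K=1, OF pR p0]) (use n1 lam0 lam1 VA tP0 in auto)
  have exA: "exp (-2 * tP^2 / (1^2 * \<sigma>2)) = exp (- (?S * ln 2)) * exp (-L)"
  proof -
    have "2 * tP^2 / (1^2 * \<sigma>2) = k^2 / 2" unfolding tP_def power_mult_distrib power_divide sq2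
      using \<sigma>pos by simp
    then show ?thesis unfolding k2 by (simp flip: exp_add)
  qed
  have cardS: "real (card (UNIV :: 's set set)) * exp (- (?S * ln 2)) = 1"
  proof -
    have "card (UNIV :: 's set set) = 2 ^ CARD('s)" using card_Pow[of "UNIV :: 's set"] by simp
    moreover have "exp (?S * ln 2) = 2 ^ CARD('s)" by (simp add: exp_of_nat_mult)
    ultimately show ?thesis by (simp add: exp_minus field_simps)
  qed
  define nu where "nu = (\<lambda>s'::'s. real n * (lam / real n) * pmf Pt s' + real N * ((1 - lam) / real N) * pmf P0t s')"
  define pdp where "pdp = (\<lambda>\<omega> (s'::'s). lam * emp_dist n (fst \<omega>) s' + (1 - lam) * emp_dist N (snd \<omega>) s')"
  have pdpe: "P_DP L \<Delta> n N \<omega> s' = pdp \<omega> s'" for \<omega> s' unfolding P_DP_def pdp_def lam_def ..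
  have EAx: "EA A \<omega> - muA A = (\<Sum>s'\<in>UNIV. (pdp \<omega> s' - nu s') * indicator A s')" for A \<omega>
  proof -
    have e1: "EA A \<omega> = (\<Sum>s'\<in>UNIV. pdp \<omega> s' * indicator A s')" unfolding EA_def pdp_def by simp
    have e2: "muA A = (\<Sum>s'\<in>UNIV. nu s' * indicator A s')"
      unfolding muA_def nu_def
      by (simp only: mult_zero_left add_0_left sum_distrib_left sum.distrib[symmetric] distrib_right mult.assoc)
    show ?thesis unfolding e1 e2 by (simp add: left_diff_distrib sum_subtractf)
  qed
  have sum1: "(\<Sum>s'\<in>UNIV. emp_dist m w s') = real m / real m" for m and w :: "nat \<Rightarrow> real \<times> 's"
    using emp_identity[of m w "\<lambda>_. 1"] by simp
  have sumx: "(\<Sum>s'\<in>UNIV. pdp \<omega> s' - nu s') = 0" for \<omega>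
    unfolding sum_subtractf pdp_def nu_def
    by (simp add: sum.distrib sum_distrib_left[symmetric] sum1 sum_pmf_eq_1)
  have biasP: "(\<Sum>s'\<in>UNIV. \<bar>nu s' - pmf Pt s'\<bar>) \<le> (1 - lam) * \<Delta>"
  proof (cases "N = 0")
    case True
    then show ?thesis using lamN n1 unfolding nu_def by simp
  next
    case False
    have "(\<Sum>s'\<in>UNIV. \<bar>nu s' - pmf Pt s'\<bar>) = (\<Sum>s'\<in>UNIV. (1 - lam) * \<bar>pmf (P h s a) s' - pmf (P0 h s a) s'\<bar>)"
    proof (intro sum.cong refl)
      fix s'
      have "nu s' - pmf Pt s' = (1 - lam) * (pmf P0t s' - pmf Pt s')"
        unfolding nu_def wn wN[OF False] by (simp add: algebra_simps)
      then show "\<bar>nu s' - pmf Pt s'\<bar> = (1 - lam) * \<bar>pmf (P h s a) s' - pmf (P0 h s a) s'\<bar>"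
        using lam1 unfolding Pt_def P0t_def by (simp add: abs_mult abs_minus_commute)
    qed
    also have "\<dots> \<le> (1 - lam) * \<Delta>" using dP lam1 by (simp add: sum_distrib_left[symmetric] mult_left_mono)
    finally show ?thesis .
  qed
  have sub: "{\<omega> \<in> space \<Omega>. (\<Sum>s'\<in>UNIV. \<bar>P_DP L \<Delta> n N \<omega> s' - pmf Pt s'\<bar>) > eP}
      \<subseteq> (\<Union>A\<in>UNIV. {\<omega>\<in>space \<Omega>. EA A \<omega> - muA A > tP})"
  proof safe
    fix \<omega> assume om: "\<omega> \<in> space \<Omega>" and ev: "(\<Sum>s'\<in>UNIV. \<bar>P_DP L \<Delta> n N \<omega> s' - pmf Pt s'\<bar>) > eP"
    define x where "x = (\<lambda>s'. pdp \<omega> s' - nu s')"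
    have "(\<Sum>s'\<in>UNIV. \<bar>P_DP L \<Delta> n N \<omega> s' - pmf Pt s'\<bar>) \<le> (\<Sum>s'\<in>UNIV. \<bar>x s'\<bar> + \<bar>nu s' - pmf Pt s'\<bar>)"
      unfolding pdpe x_def by (intro sum_mono) linarith
    also have "\<dots> = (\<Sum>s'\<in>UNIV. \<bar>x s'\<bar>) + (\<Sum>s'\<in>UNIV. \<bar>nu s' - pmf Pt s'\<bar>)" by (rule sum.distrib)
    finally have gt: "(\<Sum>s'\<in>UNIV. \<bar>x s'\<bar>) > k * sq" using ev biasP unfolding eP_def by linarith
    define A where "A = {s'. x s' \<ge> 0}"
    have "(\<Sum>s'\<in>UNIV. \<bar>x s'\<bar>) = (\<Sum>s'\<in>UNIV. 2 * (x s' * indicator A s') - x s')"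
      by (intro sum.cong refl) (simp add: A_def indicator_def)
    also have "\<dots> = 2 * (\<Sum>s'\<in>UNIV. x s' * indicator A s') - (\<Sum>s'\<in>UNIV. x s')"
      by (simp only: sum_subtractf sum_distrib_left)
    also have "(\<Sum>s'\<in>UNIV. x s') = 0" using sumx[of \<omega>] unfolding x_def .
    also have "2 * (\<Sum>s'\<in>UNIV. x s' * indicator A s') - 0 = 2 * (\<Sum>s'\<in>UNIV. x s' * indicator A s')" by (simp only: diff_zero)
    finally have "(\<Sum>s'\<in>UNIV. x s' * indicator A s') > tP" using gt unfolding tP_def by linarith
    then have "EA A \<omega> - muA A > tP" unfolding EAx x_def .
    then show "\<omega> \<in> (\<Union>A\<in>UNIV. {\<omega>\<in>space \<Omega>. EA A \<omega> - muA A > tP})" using om by blast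
  qed
  have setsA: "{\<omega>\<in>space \<Omega>. EA A \<omega> - muA A > tP} \<in> sets \<Omega>" for A
    using CA1[of A] by measurable
  interpret Op: prob_space \<Omega> by (rule O)
  have "measure \<Omega> {\<omega> \<in> space \<Omega>. (\<Sum>s'\<in>UNIV. \<bar>P_DP L \<Delta> n N \<omega> s' - pmf Pt s'\<bar>) > eP}
      \<le> measure \<Omega> (\<Union>A\<in>UNIV. {\<omega>\<in>space \<Omega>. EA A \<omega> - muA A > tP})"
    by (rule Op.finite_measure_mono[OF sub]) (intro sets.finite_UN setsA, auto)
  also have "\<dots> \<le> (\<Sum>A\<in>UNIV. measure \<Omega> {\<omega>\<in>space \<Omega>. EA A \<omega> - muA A > tP})"
    by (rule measure_UNION_le) (auto intro: setsA)
  also have "\<dots> \<le> (\<Sum>A\<in>(UNIV::'s set set). exp (- (?S * ln 2)) * exp (-L))"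
    by (intro sum_mono) (simp only: exA[symmetric] CA2)
  also have "\<dots> = exp (-L)" using cardS by (simp add: mult.assoc[symmetric])
  also have "\<dots> < bnd" unfolding bnd by simp
  finally have probP: "measure \<Omega> {\<omega> \<in> space \<Omega>. (\<Sum>s'\<in>UNIV. \<bar>P_DP L \<Delta> n N \<omega> s' - pmf Pt s'\<bar>) > eP} < bnd" .
  have Vc: "0 \<le> V s' \<and> 1 + V s' \<le> real H" for s' using Vb[of s'] by simp
  have Hpos: "real H > 0" using assms(4) by simp
  have Vdp: "r_DP L \<Delta> n N \<omega> - r h s a + (\<Sum>s'\<in>UNIV. (P_DP L \<Delta> n N \<omega> s' - pmf Pt s') * V s')
     = (1 * (lam * emp_reward n (fst \<omega>) + (1 - lam) * emp_reward N (snd \<omega>))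
        + (\<Sum>s'\<in>UNIV. (lam * emp_dist n (fst \<omega>) s' + (1 - lam) * emp_dist N (snd \<omega>) s') * V s'))
       - (r h s a + (\<Sum>s'\<in>UNIV. pmf Pt s' * V s'))" for \<omega>
    unfolding r_DP_def P_DP_def lam_def[symmetric] by (simp add: left_diff_distrib sum_subtractf)
  define muV where "muV = real n * (lam / real n) * (1 * mean_reward Rt + (\<Sum>s'\<in>UNIV. pmf Pt s' * V s'))
        + real N * ((1 - lam) / real N) * (1 * mean_reward R0t + (\<Sum>s'\<in>UNIV. pmf P0t s' * V s'))"
  have CV1: "(\<lambda>\<omega>. 1 * (lam * emp_reward n (fst \<omega>) + (1 - lam) * emp_reward N (snd \<omega>))
        + (\<Sum>s'\<in>UNIV. (lam * emp_dist n (fst \<omega>) s' + (1 - lam) * emp_dist N (snd \<omega>) s') * V s')) \<in> borel_measurable \<Omega>"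
    unfolding \<Omega>_def
    by (rule conc(1)[where \<alpha>=1 and V=V and K="real H", OF pR p0]) (use n1 lam0 lam1 Vc Hpos in auto)
  have CV2: "measure \<Omega> {\<omega>\<in>space \<Omega>. \<bar>(1 * (lam * emp_reward n (fst \<omega>) + (1 - lam) * emp_reward N (snd \<omega>))
        + (\<Sum>s'\<in>UNIV. (lam * emp_dist n (fst \<omega>) s' + (1 - lam) * emp_dist N (snd \<omega>) s') * V s')) - muV\<bar> > real H * c * sq}
     < 2 * exp (-2 * (real H * c * sq)^2 / ((real H)^2 * \<sigma>2))"
    unfolding \<Omega>_def muV_def \<sigma>2_def
    by (rule conc(2)[where \<alpha>=1 and V=V and K="real H", OF pR p0]) (use n1 lam0 lam1 c0 sq0 Vc Hpos in auto)
  have exV: "2 * exp (-2 * (real H * c * sq)^2 / ((real H)^2 * \<sigma>2)) = bnd"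
    unfolding bnd power_mult_distrib sq2 c2 using \<sigma>pos Hpos by simp
  have biasV: "\<bar>muV - (r h s a + (\<Sum>s'\<in>UNIV. pmf Pt s' * V s'))\<bar> \<le> (1 - lam) * (real H * \<Delta>)"
  proof (cases "N = 0")
    case True
    then show ?thesis using lamN n1 unfolding muV_def r_def Rt_def by simp
  next
    case False
    have eq: "muV - (r h s a + (\<Sum>s'\<in>UNIV. pmf Pt s' * V s'))
        = (1 - lam) * ((r0 h s a - r h s a) + (\<Sum>s'\<in>UNIV. (pmf P0t s' - pmf Pt s') * V s'))"
      unfolding muV_def r_def r0_def Rt_def R0t_def wn wN[OF False]
      by (simp add: algebra_simps sum_subtractf left_diff_distrib)
    have "\<bar>\<Sum>s'\<in>UNIV. (pmf P0t s' - pmf Pt s') * V s'\<bar> \<le> (\<Sum>s'\<in>UNIV. \<bar>pmf P0t s' - pmf Pt s'\<bar> * (real H - 1))"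
    proof -
      have "\<bar>\<Sum>s'\<in>UNIV. (pmf P0t s' - pmf Pt s') * V s'\<bar> \<le> (\<Sum>s'\<in>UNIV. \<bar>(pmf P0t s' - pmf Pt s') * V s'\<bar>)"
        by (rule sum_abs)
      also have "\<dots> \<le> (\<Sum>s'\<in>UNIV. \<bar>pmf P0t s' - pmf Pt s'\<bar> * (real H - 1))"
        using Vb by (intro sum_mono) (auto simp: abs_mult intro!: mult_left_mono)
      finally show ?thesis .
    qed
    also have "\<dots> = (\<Sum>s'\<in>UNIV. \<bar>pmf (P h s a) s' - pmf (P0 h s a) s'\<bar>) * (real H - 1)"
      unfolding Pt_def P0t_def by (simp add: sum_distrib_right abs_minus_commute)
    also have "\<dots> \<le> \<Delta> * (real H - 1)" using dP assms(4) by (intro mult_right_mono) auto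
    finally have s1: "\<bar>\<Sum>s'\<in>UNIV. (pmf P0t s' - pmf Pt s') * V s'\<bar> \<le> \<Delta> * (real H - 1)" .
    have "\<bar>(r0 h s a - r h s a) + (\<Sum>s'\<in>UNIV. (pmf P0t s' - pmf Pt s') * V s')\<bar> \<le> \<Delta> + \<Delta> * (real H - 1)"
      using s1 dr by (smt (verit) abs_triangle_ineq abs_minus_commute)
    also have "\<dots> = real H * \<Delta>" by (simp add: algebra_simps)
    finally have s2: "\<bar>(r0 h s a - r h s a) + (\<Sum>s'\<in>UNIV. (pmf P0t s' - pmf Pt s') * V s')\<bar> \<le> real H * \<Delta>" .
    show ?thesis unfolding eq abs_mult using s2 lam1 by (simp add: mult_left_mono)
  qed
  have eVe: "eV = (1 - lam) * (real H * \<Delta>) + real H * c * sq" unfolding eV_def eR_def by (simp add: algebra_simps)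
  have probV: "measure \<Omega> {\<omega> \<in> space \<Omega>. \<bar>r_DP L \<Delta> n N \<omega> - r h s a
              + (\<Sum>s'\<in>UNIV. (P_DP L \<Delta> n N \<omega> s' - pmf Pt s') * V s')\<bar> > eV} < bnd"
    using shift_bound[OF O CV1 biasV CV2] unfolding exV eVe[symmetric] Vdp .
  show ?thesis
    apply (rule exI[of _ eR], rule exI[of _ eP], rule exI[of _ eV])
    unfolding Let_def \<Omega>_def[symmetric] V_def[symmetric] bnd_def[symmetric] Rt_def[symmetric] Pt_def[symmetric] R0t_def[symmetric] P0t_def[symmetric]
    using eR0 eP0 eV0 eRle eVle ePle strict probR probP probV unfolding caseB_def by auto
qed


end
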